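(* Let $M>0$. There exist a real Banach space $(X,\|\cdot\|)$ that is linearly isomorphic to $\ell_1$ and an approximately convex set $A\subseteq B_M(X)$ such that $$\mathcal{H}(A,\operatorname{Co}(A))=\operatorname{diam}(A)=2M.$$
   Context: $B_M(X)=\{x\in X:\|x\|\le M\}$. A set $A$ is approximately convex if $d(tx+(1-t)y,A)\le1$ for all $x,y\in A$, $t\in[0,1]$, where $d(x,A)=\inf_{a\in A}\|x-a\|$. $\mathcal{H}$ is the Hausdorff distance, $\operatorname{Co}$ the convex hull, $\operatorname{diam}(A)=\sup\{\|x-y\|:x,y\in A\}$. *)

theory Defs
  imports "HOL-Analysis.Analysis"
begin

definition l1space :: "(nat \<Rightarrow> real) set" where
  "l1space = {x. summable (\<lambda>n. \<bar>x n\<bar>)}"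

definition l1norm :: "(nat \<Rightarrow> real) \<Rightarrow> real" where
  "l1norm x = (\<Sum>n. \<bar>x n\<bar>)"

definition vadd :: "(nat \<Rightarrow> real) \<Rightarrow> (nat \<Rightarrow> real) \<Rightarrow> (nat \<Rightarrow> real)" where
  "vadd x y = (\<lambda>n. x n + y n)"

definition vsub :: "(nat \<Rightarrow> real) \<Rightarrow> (nat \<Rightarrow> real) \<Rightarrow> (nat \<Rightarrow> real)" where
  "vsub x y = (\<lambda>n. x n - y n)"

definition vscale :: "real \<Rightarrow> (nat \<Rightarrow> real) \<Rightarrow> (nat \<Rightarrow> real)" where
  "vscale c x = (\<lambda>n. c * x n)"

definition is_norm_on_l1 :: "((nat \<Rightarrow> real) \<Rightarrow> real) \<Rightarrow> bool" where
  "is_norm_on_l1 N \<longleftrightarrow>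
     (\<forall>x\<in>l1space. N x \<ge> 0 \<and> (N x = 0 \<longleftrightarrow> x = (\<lambda>n. 0))) \<and>
     (\<forall>x\<in>l1space. \<forall>c. N (vscale c x) = \<bar>c\<bar> * N x) \<and>
     (\<forall>x\<in>l1space. \<forall>y\<in>l1space. N (vadd x y) \<le> N x + N y)"

text \<open>(l1, N) is a real Banach space linearly isomorphic to l1: N is a norm equivalent
  to the l1 norm (so the identity is a bounded linear isomorphism; completeness follows).\<close>
definition equiv_l1_norm :: "((nat \<Rightarrow> real) \<Rightarrow> real) \<Rightarrow> bool" where
  "equiv_l1_norm N \<longleftrightarrow> is_norm_on_l1 N \<and>
     (\<exists>c C. 0 < c \<and> 0 < C \<and> (\<forall>x\<in>l1space. c * l1norm x \<le> N x \<and> N x \<le> C * l1norm x))"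

definition ball_N :: "((nat \<Rightarrow> real) \<Rightarrow> real) \<Rightarrow> real \<Rightarrow> (nat \<Rightarrow> real) set" where
  "ball_N N M = {x\<in>l1space. N x \<le> M}"

definition dist_set_N :: "((nat \<Rightarrow> real) \<Rightarrow> real) \<Rightarrow> (nat \<Rightarrow> real) \<Rightarrow> (nat \<Rightarrow> real) set \<Rightarrow> ereal" where
  "dist_set_N N x A = (INF a\<in>A. ereal (N (vsub x a)))"

definition approx_convex_N :: "((nat \<Rightarrow> real) \<Rightarrow> real) \<Rightarrow> (nat \<Rightarrow> real) set \<Rightarrow> bool" where
  "approx_convex_N N A \<longleftrightarrow>
     (\<forall>x\<in>A. \<forall>y\<in>A. \<forall>t\<in>{0..1::real}.
        dist_set_N N (vadd (vscale t x) (vscale (1 - t) y)) A \<le> 1)"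

definition convex_seq :: "(nat \<Rightarrow> real) set \<Rightarrow> bool" where
  "convex_seq C \<longleftrightarrow> (\<forall>x\<in>C. \<forall>y\<in>C. \<forall>t\<in>{0..1::real}. vadd (vscale t x) (vscale (1 - t) y) \<in> C)"

definition Co :: "(nat \<Rightarrow> real) set \<Rightarrow> (nat \<Rightarrow> real) set" where
  "Co A = \<Inter>{C. A \<subseteq> C \<and> convex_seq C}"

definition hausdorff_N :: "((nat \<Rightarrow> real) \<Rightarrow> real) \<Rightarrow> (nat \<Rightarrow> real) set \<Rightarrow> (nat \<Rightarrow> real) set \<Rightarrow> ereal" where
  "hausdorff_N N A B = max (SUP a\<in>A. dist_set_N N a B) (SUP b\<in>B. dist_set_N N b A)"

definition diam_N :: "((nat \<Rightarrow> real) \<Rightarrow> real) \<Rightarrow> (nat \<Rightarrow> real) set \<Rightarrow> ereal" where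
  "diam_N N A = (SUP p\<in>A \<times> A. ereal (N (vsub (fst p) (snd p))))"

end

theory Submission
  imports Defs
begin


lemma l1_fin:
  assumes "\<And>i. i \<ge> k \<Longrightarrow> x i = 0"
  shows "x \<in> l1space" "l1norm x = (\<Sum>i<k. \<bar>x i\<bar>)"
proof -
  have "(\<lambda>i. \<bar>x i\<bar>) sums (\<Sum>i\<in>{..<k}. \<bar>x i\<bar>)"
    by (rule sums_finite) (use assms in auto)
  then show "x \<in> l1space" "l1norm x = (\<Sum>i<k. \<bar>x i\<bar>)"
    unfolding l1space_def l1norm_def by (auto simp: sums_iff)
qed

lemma l1_add: "x \<in> l1space \<Longrightarrow> y \<in> l1space \<Longrightarrow> vadd x y \<in> l1space"
  unfolding l1space_def vadd_def mem_Collect_eq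
  by (rule summable_comparison_test[of _ "\<lambda>n. \<bar>x n\<bar> + \<bar>y n\<bar>"]) (auto intro: summable_add)

lemma l1_scale: "x \<in> l1space \<Longrightarrow> vscale c x \<in> l1space"
  unfolding l1space_def vscale_def by (simp add: abs_mult summable_mult)

lemma l1norm_nonneg: "x \<in> l1space \<Longrightarrow> l1norm x \<ge> 0"
  unfolding l1space_def l1norm_def by (simp add: suminf_nonneg)

lemma l1norm_zero: "x \<in> l1space \<Longrightarrow> l1norm x = 0 \<longleftrightarrow> x = (\<lambda>n. 0)"
  unfolding l1space_def l1norm_def by (auto simp: suminf_eq_zero_iff fun_eq_iff)

lemma l1norm_scale: "x \<in> l1space \<Longrightarrow> l1norm (vscale c x) = \<bar>c\<bar> * l1norm x"
  unfolding l1space_def l1norm_def vscale_def by (simp add: abs_mult suminf_mult)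

lemma l1norm_tri: "x \<in> l1space \<Longrightarrow> y \<in> l1space \<Longrightarrow> l1norm (vadd x y) \<le> l1norm x + l1norm y"
proof -
  assume a: "x \<in> l1space" "y \<in> l1space"
  have s: "summable (\<lambda>n. \<bar>x n + y n\<bar>)" using l1_add[OF a] by (simp add: l1space_def vadd_def)
  have "(\<Sum>n. \<bar>x n + y n\<bar>) \<le> (\<Sum>n. \<bar>x n\<bar> + \<bar>y n\<bar>)"
    using a s by (intro suminf_le) (auto simp: l1space_def intro: summable_add)
  also have "\<dots> = (\<Sum>n. \<bar>x n\<bar>) + (\<Sum>n. \<bar>y n\<bar>)"
    using a by (intro suminf_add[symmetric]) (auto simp: l1space_def)
  finally show ?thesis by (simp add: l1norm_def vadd_def)
qed

lemma equiv_l1: "equiv_l1_norm l1norm"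
  unfolding equiv_l1_norm_def is_norm_on_l1_def
  using l1norm_nonneg l1norm_zero l1norm_scale l1norm_tri
  by (auto intro!: exI[of _ 1])

lemma l1norm_sub: "x \<in> l1space \<Longrightarrow> y \<in> l1space \<Longrightarrow> l1norm (vsub x y) \<le> l1norm x + l1norm y"
proof -
  assume a: "x \<in> l1space" "y \<in> l1space"
  have "vsub x y = vadd x (vscale (-1) y)" by (auto simp: vsub_def vadd_def vscale_def)
  moreover have "l1norm (vadd x (vscale (-1) y)) \<le> l1norm x + l1norm (vscale (-1) y)"
    by (rule l1norm_tri[OF a(1) l1_scale[OF a(2)]])
  ultimately show ?thesis using l1norm_scale[OF a(2), of "-1"] by simp
qed

lemma convex_comb:
  assumes "x \<in> l1space" "y \<in> l1space" "t \<in> {0..1}"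
  shows "vadd (vscale t x) (vscale (1-t) y) \<in> l1space"
    "l1norm (vadd (vscale t x) (vscale (1-t) y)) \<le> t * l1norm x + (1-t) * l1norm y"
proof -
  show "vadd (vscale t x) (vscale (1-t) y) \<in> l1space" using assms by (auto intro!: l1_add l1_scale)
  have "l1norm (vadd (vscale t x) (vscale (1-t) y)) \<le> l1norm (vscale t x) + l1norm (vscale (1-t) y)"
    by (rule l1norm_tri[OF l1_scale[OF assms(1)] l1_scale[OF assms(2)]])
  then show "l1norm (vadd (vscale t x) (vscale (1-t) y)) \<le> t * l1norm x + (1-t) * l1norm y"
    using assms l1norm_scale[OF assms(1), of t] l1norm_scale[OF assms(2), of "1-t"] by simp
qed

lemma ball_convex: "convex_seq (ball_N l1norm M)"
  unfolding convex_seq_def ball_N_def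
proof (intro ballI, goal_cases)
  case (1 x y t)
  then have "t * l1norm x + (1-t) * l1norm y \<le> t * M + (1-t) * M"
    by (intro add_mono mult_left_mono) auto
  then show ?case using convex_comb[of x y t] 1 by (auto simp: algebra_simps)
qed

lemma Co_convex: "convex_seq (Co A)"
  unfolding convex_seq_def Co_def by auto

lemma Co_sub: "A \<subseteq> Co A" unfolding Co_def by auto

lemma Co_least: "A \<subseteq> C \<Longrightarrow> convex_seq C \<Longrightarrow> Co A \<subseteq> C" unfolding Co_def by auto



definition ent :: "nat \<Rightarrow> (nat \<Rightarrow> real) \<Rightarrow> real" where
  "ent n p = (\<Sum>i<n. - p i * ln (p i))"

definition probv :: "nat \<Rightarrow> (nat \<Rightarrow> real) \<Rightarrow> bool" where
  "probv n p \<longleftrightarrow> (\<forall>i. 0 \<le> p i) \<and> (\<forall>i\<ge>n. p i = 0) \<and> (\<Sum>i<n. p i) = 1"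

lemma probv_mono:
  assumes "probv n p" "n \<le> m"
  shows "probv m p" "ent m p = ent n p"
proof -
  have z: "\<forall>i\<in>{..<m} - {..<n}. p i = 0" using assms unfolding probv_def by auto
  have "(\<Sum>i<m. p i) = (\<Sum>i<n. p i)"
    using z assms(2) by (intro sum.mono_neutral_right) auto
  then show "probv m p" using assms unfolding probv_def by auto
  show "ent m p = ent n p" unfolding ent_def
    using z assms(2) by (intro sum.mono_neutral_right) auto
qed

lemma probv_le1: "probv n p \<Longrightarrow> p i \<le> 1"
proof -
  assume a: "probv n p"
  show ?thesis
  proof (cases "i < n")
    case True
    have "p i \<le> (\<Sum>j<n. p j)" using a True unfolding probv_def
      by (intro member_le_sum) auto
    then show ?thesis using a unfolding probv_def by simp
  next
    case False then show ?thesis using a unfolding probv_def by auto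
  qed
qed

lemma f_subadd:
  fixes a b :: real assumes "0 \<le> a" "0 \<le> b"
  shows "- (a+b) * ln (a+b) \<le> - a * ln a - b * ln b"
proof -
  have 1: "a * ln a \<le> a * ln (a+b)"
  proof (cases "a = 0")
    case False then show ?thesis using assms by (intro mult_left_mono) auto
  qed simp
  have 2: "b * ln b \<le> b * ln (a+b)"
  proof (cases "b = 0")
    case False then show ?thesis using assms by (intro mult_left_mono) auto
  qed simp
  show ?thesis using 1 2 by (simp add: algebra_simps)
qed

lemma f_mult:
  fixes t p :: real assumes "0 \<le> t" "0 \<le> p"
  shows "- (t*p) * ln (t*p) = t * (- p * ln p) + p * (- t * ln t)"
proof (cases "t = 0 \<or> p = 0")
  case False
  then show ?thesis using assms by (simp add: ln_mult_pos algebra_simps)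
qed auto

lemma f_le: fixes x :: real assumes "0 \<le> x" shows "- x * ln x \<le> 1 - x"
proof (cases "x = 0")
  case False
  then have "x > 0" using assms by simp
  have "ln (1/x) \<le> 1/x - 1" using \<open>x>0\<close> by (intro ln_le_minus_one) auto
  then have "- ln x \<le> 1/x - 1" using \<open>x>0\<close> by (simp add: ln_div)
  then have "x * (- ln x) \<le> x * (1/x - 1)" using \<open>x>0\<close> by (intro mult_left_mono) auto
  then show ?thesis using \<open>x>0\<close> by (simp add: algebra_simps)
qed simp

lemma sum4:
  fixes A B p q :: "nat \<Rightarrow> real"
  shows "(\<Sum>i\<in>S. (t * A i + p i * c1) + (u * B i + q i * c2)) = t * sum A S + c1 * sum p S + (u * sum B S + c2 * sum q S)"
  by (simp add: sum.distrib sum_distrib_left sum_distrib_right mult.commute)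

lemma mix_ent:
  assumes p: "probv n p" and q: "probv n q" and t: "0 \<le> t" "t \<le> 1"
  shows "probv n (\<lambda>i. t * p i + (1-t) * q i)"
    "ent n (\<lambda>i. t * p i + (1-t) * q i) \<le> t * ent n p + (1-t) * ent n q + 1"
proof -
  have sp: "(\<Sum>i<n. p i) = 1" and sq: "(\<Sum>i<n. q i) = 1" using p q unfolding probv_def by auto
  have "(\<Sum>i<n. t * p i + (1-t) * q i) = t * (\<Sum>i<n. p i) + (1-t) * (\<Sum>i<n. q i)"
    by (simp add: sum.distrib sum_distrib_left)
  then show "probv n (\<lambda>i. t * p i + (1-t) * q i)" using p q t unfolding probv_def by auto
  have "ent n (\<lambda>i. t * p i + (1-t) * q i) \<le>
      (\<Sum>i<n. (t * (- p i * ln (p i)) + p i * (- t * ln t)) + ((1-t) * (- q i * ln (q i)) + q i * (- (1-t) * ln (1-t))))"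
    unfolding ent_def
  proof (intro sum_mono)
    fix i
    have "- (t * p i + (1-t) * q i) * ln (t * p i + (1-t) * q i) \<le> - (t * p i) * ln (t * p i) - ((1-t) * q i) * ln ((1-t) * q i)"
      using p q t unfolding probv_def by (intro f_subadd) auto
    also have "\<dots> = (t * (- p i * ln (p i)) + p i * (- t * ln t)) + ((1-t) * (- q i * ln (q i)) + q i * (- (1-t) * ln (1-t)))"
    proof -
      have "0 \<le> p i" "0 \<le> q i" using p q unfolding probv_def by auto
      then have e1: "- (t * p i) * ln (t * p i) = t * (- p i * ln (p i)) + p i * (- t * ln t)"
        and e2: "- ((1-t) * q i) * ln ((1-t) * q i) = (1-t) * (- q i * ln (q i)) + q i * (- (1-t) * ln (1-t))"
        using t by (intro f_mult; simp)+
      have "- (t * p i) * ln (t * p i) - ((1 - t) * q i) * ln ((1 - t) * q i) =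
        - (t * p i) * ln (t * p i) + - ((1 - t) * q i) * ln ((1 - t) * q i)" by simp
      also have "\<dots> = (t * (- p i * ln (p i)) + p i * (- t * ln t)) + ((1-t) * (- q i * ln (q i)) + q i * (- (1-t) * ln (1-t)))"
        unfolding e1 e2 ..
      finally show ?thesis .
    qed
    finally show "- (t * p i + (1-t) * q i) * ln (t * p i + (1-t) * q i) \<le> \<dots>" .
  qed
  also have "\<dots> = t * ent n p + (- t * ln t) * (\<Sum>i<n. p i) + ((1-t) * ent n q + (- (1-t) * ln (1-t)) * (\<Sum>i<n. q i))"
    unfolding ent_def by (rule sum4)
  also have "\<dots> = t * ent n p + (1-t) * ent n q + ((- t * ln t) + (- (1-t) * ln (1-t)))"
    using sp sq by simp
  also have "\<dots> \<le> t * ent n p + (1-t) * ent n q + 1"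
    using f_le[of t] f_le[of "1-t"] t by simp
  finally show "ent n (\<lambda>i. t * p i + (1-t) * q i) \<le> t * ent n p + (1-t) * ent n q + 1" .
qed

lemma min_bound:
  fixes p v L :: real and n :: nat
  assumes "0 \<le> p" "p \<le> 1" "0 \<le> v" "v \<le> 1/n" "L > 0" "n > 0"
  shows "min v p \<le> (- p * ln p) / L + p * exp L / n"
proof (cases "p \<le> exp (-L)")
  case True
  have a: "p \<le> (- p * ln p) / L"
  proof (cases "p = 0")
    case False
    then have "p > 0" using assms by simp
    have "ln p \<le> ln (exp (-L))" using True \<open>p>0\<close> by (subst ln_le_cancel_iff) auto
    then have "ln p \<le> -L" by simp
    then have "p * ln p \<le> p * (-L)" using \<open>p>0\<close> by (intro mult_left_mono) auto
    then have "p * L \<le> - p * ln p" by simp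
    then show ?thesis using assms by (simp add: field_simps)
  qed simp
  have "0 \<le> p * exp L / n" using assms by simp
  then show ?thesis using a by linarith
next
  case False
  then have "exp (-L) * exp L < p * exp L" by (intro mult_strict_right_mono) auto
  then have "1 < p * exp L" by (simp add: exp_minus_inverse mult.commute)
  then have "1 / n \<le> p * exp L / n" using assms by (simp add: divide_right_mono)
  moreover have "0 \<le> (- p * ln p) / L"
  proof (cases "p = 0")
    case False
    then have "ln p \<le> 0" using assms by simp
    then have "p * ln p \<le> 0" using assms by (simp add: mult_nonneg_nonpos)
    then have "p * ln p / L \<le> 0" using assms by (intro divide_nonpos_pos) auto
    then show ?thesis by simp
  qed simp
  ultimately show ?thesis using assms by linarith
qed



definition ev :: "nat \<Rightarrow> nat \<Rightarrow> real" where "ev k = (\<lambda>i. if i = k then 1 else 0)"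
definition uv :: "nat \<Rightarrow> nat \<Rightarrow> real" where "uv n = (\<lambda>i. if i < n then 1 / real n else 0)"

lemma ev_prob: "probv (Suc k) (ev k)" "ent (Suc k) (ev k) = 0"
  unfolding probv_def ent_def ev_def by auto

lemma uv_prob: "n > 0 \<Longrightarrow> probv n (uv n)"
  unfolding probv_def uv_def by auto

lemma normA: assumes "probv n p" "M > 0"
  shows "vscale M p \<in> l1space" "l1norm (vscale M p) = M"
proof -
  have z: "\<And>i. i \<ge> n \<Longrightarrow> vscale M p i = 0" using assms unfolding probv_def vscale_def by auto
  show "vscale M p \<in> l1space" by (rule l1_fin(1)[OF z])
  have "l1norm (vscale M p) = (\<Sum>i<n. \<bar>vscale M p i\<bar>)" by (rule l1_fin(2)[OF z])
  also have "\<dots> = (\<Sum>i<n. M * p i)" using assms unfolding probv_def vscale_def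
    by (intro sum.cong) (auto simp: abs_mult)
  also have "\<dots> = M" using assms unfolding probv_def by (simp add: sum_distrib_left[symmetric])
  finally show "l1norm (vscale M p) = M" .
qed

lemma sum2:
  fixes A p :: "nat \<Rightarrow> real"
  shows "(\<Sum>i\<in>S. A i / L + p i * c / d) = sum A S / L + c / d * sum p S"
proof -
  have "(\<Sum>i\<in>S. A i / L + p i * c / d) = (\<Sum>i\<in>S. A i) / L + (\<Sum>i\<in>S. p i) * c / d"
    by (simp only: sum.distrib sum_divide_distrib[symmetric] sum_distrib_right[symmetric])
  then show ?thesis by simp
qed

lemma lower_bound:
  assumes p: "probv m p" and e: "ent m p \<le> K" and n: "n > 0" and L: "L > 0"
  shows "l1norm (vsub (uv n) p) \<ge> 2 - 2 * (K / L + exp L / n)"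
proof -
  define k where "k = max n m"
  have pk: "probv k p" "ent k p = ent m p" using probv_mono[OF p, of k] k_def by auto
  have vk: "probv k (uv n)" using probv_mono[OF uv_prob[OF n], of k] k_def by auto
  have z: "\<And>i. i \<ge> k \<Longrightarrow> vsub (uv n) p i = 0" using pk vk unfolding probv_def vsub_def by auto
  have "l1norm (vsub (uv n) p) = (\<Sum>i<k. \<bar>uv n i - p i\<bar>)" using l1_fin(2)[OF z] by (simp add: vsub_def)
  also have "\<dots> = (\<Sum>i<k. uv n i + p i - 2 * min (uv n i) (p i))"
    by (intro sum.cong refl) (simp add: min_def)
  also have "\<dots> = (\<Sum>i<k. uv n i) + (\<Sum>i<k. p i) - 2 * (\<Sum>i<k. min (uv n i) (p i))"
    by (simp add: sum.distrib sum_subtractf sum_distrib_left)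
  also have "\<dots> = 2 - 2 * (\<Sum>i<k. min (uv n i) (p i))" using pk vk unfolding probv_def by simp
  finally have eq: "l1norm (vsub (uv n) p) = 2 - 2 * (\<Sum>i<k. min (uv n i) (p i))" .
  have "(\<Sum>i<k. min (uv n i) (p i)) \<le> (\<Sum>i<k. (- p i * ln (p i)) / L + p i * exp L / n)"
  proof (intro sum_mono)
    fix i
    show "min (uv n i) (p i) \<le> (- p i * ln (p i)) / L + p i * exp L / n"
    proof (rule min_bound)
      show "0 \<le> p i" using pk(1) unfolding probv_def by blast
      show "p i \<le> 1" by (rule probv_le1[OF pk(1)])
      show "0 \<le> uv n i" unfolding uv_def by simp
      show "uv n i \<le> 1 / real n" unfolding uv_def by simp
    qed (use n L in auto)
  qed
  also have "\<dots> = ent k p / L + exp L / n * (\<Sum>i<k. p i)"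
    unfolding ent_def by (rule sum2)
  also have "\<dots> = ent m p / L + exp L / n" using pk unfolding probv_def by simp
  also have "\<dots> \<le> K / L + exp L / n" using e L by (simp add: divide_right_mono)
  finally have "2 * (\<Sum>i<k. min (uv n i) (p i)) \<le> 2 * (K / L + exp L / n)" by simp
  then show ?thesis unfolding eq by linarith
qed



definition AS :: "real \<Rightarrow> (nat \<Rightarrow> real) set" where
  "AS M = {vscale M p | p. \<exists>n. probv n p \<and> ent n p \<le> 4 * M + 1}"

lemma AS_ball: "M > 0 \<Longrightarrow> AS M \<subseteq> ball_N l1norm M"
  unfolding AS_def ball_N_def using normA by fastforce

lemma AS_l1: "M > 0 \<Longrightarrow> a \<in> AS M \<Longrightarrow> a \<in> l1space \<and> l1norm a = M"
  unfolding AS_def using normA by fastforce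

lemma ev_AS: "M > 0 \<Longrightarrow> vscale M (ev k) \<in> AS M"
  unfolding AS_def using ev_prob[of k] by force

lemma l1norm_zero_vec: "l1norm (\<lambda>n. 0) = 0"
  using l1_fin(2)[of 0 "\<lambda>n. 0"] by simp

lemma approx: assumes M: "M > 0" shows "approx_convex_N l1norm (AS M)"
  unfolding approx_convex_N_def
proof (intro ballI)
  fix x y t assume x: "x \<in> AS M" and y: "y \<in> AS M" and t: "t \<in> {0..1::real}"
  define K where "K = 4 * M + 1"
  obtain p n where xp: "x = vscale M p" and p: "probv n p" "ent n p \<le> K" using x unfolding AS_def K_def by auto
  obtain q m where yq: "y = vscale M q" and q: "probv m q" "ent m q \<le> K" using y unfolding AS_def K_def by auto
  define k where "k = Suc (max n m)"
  have pk: "probv k p" "ent k p \<le> K" using probv_mono[OF p(1), of k] p(2) k_def by auto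
  have qk: "probv k q" "ent k q \<le> K" using probv_mono[OF q(1), of k] q(2) k_def by auto
  have ek: "probv k (ev 0)" "ent k (ev 0) = 0" using probv_mono[OF ev_prob(1)[of 0], of k] ev_prob(2)[of 0] k_def by auto
  define r where "r = (\<lambda>i. t * p i + (1-t) * q i)"
  have r: "probv k r" "ent k r \<le> t * ent k p + (1-t) * ent k q + 1"
    using mix_ent[OF pk(1) qk(1), of t] t unfolding r_def by auto
  have "t * ent k p + (1-t) * ent k q \<le> t * K + (1-t) * K"
    using t pk qk by (intro add_mono mult_left_mono) auto
  then have rK: "ent k r \<le> K + 1" using r by (simp add: algebra_simps)
  define d where "d = 1 / (2 * M + 1)"
  have d: "0 < d" "d \<le> 1" using M unfolding d_def by auto
  define r' where "r' = (\<lambda>i. (1-d) * r i + (1-(1-d)) * ev 0 i)"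
  have r': "probv k r'" "ent k r' \<le> (1-d) * ent k r + (1-(1-d)) * ent k (ev 0) + 1"
    using mix_ent[OF r(1) ek(1), of "1-d"] d unfolding r'_def by auto
  have "(1-d) * ent k r \<le> (1-d) * (K + 1)" using rK d by (intro mult_left_mono) auto
  also have "(1-d) * (K+1) + 1 = K" unfolding d_def K_def using M by (simp add: field_simps)
  ultimately have r'K: "ent k r' \<le> 4 * M + 1" using r' ek unfolding K_def by simp
  have mem: "vscale M r' \<in> AS M" unfolding AS_def using r' r'K by blast
  have comb: "vadd (vscale t x) (vscale (1 - t) y) = vscale M r"
    unfolding xp yq r_def vadd_def vscale_def by (simp add: fun_eq_iff algebra_simps)
  have dv: "vsub (vscale M r) (vscale M r') = (\<lambda>i. M * d * (r i - ev 0 i))"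
    unfolding vsub_def vscale_def r'_def by (simp add: fun_eq_iff algebra_simps)
  have z: "\<And>i. i \<ge> k \<Longrightarrow> (\<lambda>i. M * d * (r i - ev 0 i)) i = 0"
    using r(1) ek(1) unfolding probv_def by auto
  have "l1norm (\<lambda>i. M * d * (r i - ev 0 i)) = (\<Sum>i<k. \<bar>M * d * (r i - ev 0 i)\<bar>)"
    by (rule l1_fin(2)[OF z])
  also have "\<dots> \<le> (\<Sum>i<k. M * d * (r i + ev 0 i))"
  proof (intro sum_mono)
    fix i
    have "0 \<le> r i" "0 \<le> ev 0 i" using r(1) ek(1) unfolding probv_def by auto
    then have "\<bar>r i - ev 0 i\<bar> \<le> r i + ev 0 i" by linarith
    then have "M * d * \<bar>r i - ev 0 i\<bar> \<le> M * d * (r i + ev 0 i)" using M d by (intro mult_left_mono) auto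
    then show "\<bar>M * d * (r i - ev 0 i)\<bar> \<le> M * d * (r i + ev 0 i)" using M d by (simp add: abs_mult)
  qed
  also have "\<dots> = M * d * ((\<Sum>i<k. r i) + (\<Sum>i<k. ev 0 i))" by (simp only: sum_distrib_left sum.distrib distrib_left)
  also have "\<dots> = 2 * M * d" using r(1) ek(1) unfolding probv_def by simp
  also have "\<dots> \<le> 1" unfolding d_def using M by (simp add: field_simps)
  finally have le1: "l1norm (vsub (vscale M r) (vscale M r')) \<le> 1" unfolding dv .
  show "dist_set_N l1norm (vadd (vscale t x) (vscale (1 - t) y)) (AS M) \<le> 1"
    unfolding dist_set_N_def comb
    by (rule INF_lower2[OF mem]) (use le1 in simp)
qed

lemma uv_Co: assumes M: "M > 0" shows "vscale M (uv (Suc n)) \<in> Co (AS M)"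
proof (induction n)
  case 0
  have "uv (Suc 0) = ev 0" unfolding uv_def ev_def by (simp add: fun_eq_iff)
  then show ?case using ev_AS[OF M, of 0] Co_sub by auto
next
  case (Suc n)
  define t where "t = real (Suc n) / real (Suc (Suc n))"
  have t: "t \<in> {0..1}" unfolding t_def by auto
  have mem2: "vscale M (ev (Suc n)) \<in> Co (AS M)" using ev_AS[OF M] Co_sub by auto
  have eq: "vscale M (uv (Suc (Suc n))) = vadd (vscale t (vscale M (uv (Suc n)))) (vscale (1 - t) (vscale M (ev (Suc n))))"
  proof -
    have "M * uv (Suc (Suc n)) i = t * (M * uv (Suc n) i) + (1 - t) * (M * ev (Suc n) i)" for i
    proof -
      consider "i < Suc n" | "i = Suc n" | "i > Suc n" by linarith
      then show ?thesis
      proof cases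
        case 1
        then have "uv (Suc (Suc n)) i = 1/real(Suc(Suc n))" "uv (Suc n) i = 1/real(Suc n)" "ev (Suc n) i = 0"
          by (auto simp: uv_def ev_def)
        moreover have "real (Suc n) / real (Suc (Suc n)) * (M * (1 / real (Suc n))) = M * (1/real(Suc(Suc n)))"
          by (simp del: of_nat_Suc)
        ultimately show ?thesis unfolding t_def by simp
      next
        case 2 then show ?thesis unfolding uv_def ev_def t_def by (simp add: field_simps)
      next
        case 3 then show ?thesis unfolding uv_def ev_def t_def by simp
      qed
    qed
    then show ?thesis unfolding vadd_def vscale_def by (simp add: fun_eq_iff)
  qed
  show ?case unfolding eq using Co_convex[of "AS M"] Suc mem2 t unfolding convex_seq_def by blast
qed



lemma dist_lower:
  assumes M: "M > 0" and n: "n > 0" and L: "L > 0"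
  shows "ereal (M * (2 - 2 * ((4*M+1) / L + exp L / n))) \<le> dist_set_N l1norm (vscale M (uv n)) (AS M)"
  unfolding dist_set_N_def
proof (rule INF_greatest)
  fix a assume "a \<in> AS M"
  then obtain p k where a: "a = vscale M p" and p: "probv k p" "ent k p \<le> 4*M+1" unfolding AS_def by auto
  have zu: "\<And>i. i \<ge> n \<Longrightarrow> uv n i = 0" unfolding uv_def by auto
  have zp: "\<And>i. i \<ge> k \<Longrightarrow> p i = 0" using p unfolding probv_def by auto
  have l: "uv n \<in> l1space" "p \<in> l1space" using l1_fin(1)[OF zu] l1_fin(1)[OF zp] by auto
  have "vsub (vscale M (uv n)) a = vscale M (vsub (uv n) p)"
    unfolding a vsub_def vscale_def by (simp add: fun_eq_iff algebra_simps)
  moreover have "l1norm (vscale M (vsub (uv n) p)) = M * l1norm (vsub (uv n) p)"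
    using l1norm_scale[of "vsub (uv n) p" M] l1_add[OF l(1) l1_scale[OF l(2), of "-1"]] M
    by (simp add: vsub_def vadd_def vscale_def)
  moreover have "M * (2 - 2 * ((4*M+1) / L + exp L / n)) \<le> M * l1norm (vsub (uv n) p)"
    using lower_bound[OF p n L] M by (intro mult_left_mono) auto
  ultimately show "ereal (M * (2 - 2 * ((4*M+1) / L + exp L / n))) \<le> ereal (l1norm (vsub (vscale M (uv n)) a))"
    by simp
qed

theorem theorem7p1:
  fixes M :: real
  assumes "M > 0"
  shows "\<exists>N A. equiv_l1_norm N \<and> A \<subseteq> ball_N N M \<and> approx_convex_N N A \<and>
           hausdorff_N N A (Co A) = ereal (2 * M) \<and> diam_N N A = ereal (2 * M)"
proof (intro exI conjI)
  note M = assms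
  let ?A = "AS M"
  show "equiv_l1_norm l1norm" by (rule equiv_l1)
  show "?A \<subseteq> ball_N l1norm M" using AS_ball[OF M] .
  show "approx_convex_N l1norm ?A" using approx[OF M] .
  have CoB: "Co ?A \<subseteq> ball_N l1norm M" by (rule Co_least[OF AS_ball[OF M] ball_convex])
  have e0: "vscale M (ev 0) \<in> ?A" by (rule ev_AS[OF M])
  have S1: "(SUP a\<in>?A. dist_set_N l1norm a (Co ?A)) \<le> 0"
  proof (rule SUP_least)
    fix a assume a: "a \<in> ?A"
    have "vsub a a = (\<lambda>n. 0)" unfolding vsub_def by simp
    then show "dist_set_N l1norm a (Co ?A) \<le> 0"
      unfolding dist_set_N_def using a Co_sub[of ?A]
      by (intro INF_lower2[of a]) (auto simp: l1norm_zero_vec)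
  qed
  have S2a: "(SUP b\<in>Co ?A. dist_set_N l1norm b ?A) \<le> ereal (2 * M)"
  proof (rule SUP_least)
    fix b assume b: "b \<in> Co ?A"
    then have bl: "b \<in> l1space" "l1norm b \<le> M" using CoB unfolding ball_N_def by auto
    have "l1norm (vsub b (vscale M (ev 0))) \<le> l1norm b + l1norm (vscale M (ev 0))"
      by (rule l1norm_sub[OF bl(1) conjunct1[OF AS_l1[OF M e0]]])
    also have "\<dots> \<le> 2 * M" using bl AS_l1[OF M e0] by simp
    finally show "dist_set_N l1norm b ?A \<le> ereal (2 * M)"
      unfolding dist_set_N_def by (intro INF_lower2[OF e0]) simp
  qed
  have S2b: "ereal (2 * M) \<le> (SUP b\<in>Co ?A. dist_set_N l1norm b ?A)"
  proof (rule ereal_le_epsilon2)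
    fix e :: real assume e: "0 < e"
    define K where "K = 4 * M + 1"
    define L where "L = 4 * M * K / e + 1"
    define n where "n = Suc (nat \<lceil>4 * M * exp L / e\<rceil>)"
    have K: "K > 0" unfolding K_def using M by simp
    have L: "L > 0" unfolding L_def using M K e by (simp add: add_pos_nonneg)
    have n: "n > 0" unfolding n_def by simp
    have "4 * M * K < e * L" unfolding L_def using e by (simp add: field_simps)
    then have h1: "2 * M * (K / L) \<le> e / 2" using L e by (simp add: field_simps)
    have "4 * M * exp L / e \<le> real n" unfolding n_def by linarith
    then have "4 * M * exp L \<le> e * real n" using e by (simp add: field_simps)
    then have h2: "2 * M * (exp L / n) \<le> e / 2" using n e by (simp add: field_simps)
    have "2 * M \<le> M * (2 - 2 * (K / L + exp L / n)) + e" 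
    proof -
      have gen: "\<And>a b. 2 * M * a \<le> e / 2 \<Longrightarrow> 2 * M * b \<le> e / 2 \<Longrightarrow> 2 * M \<le> M * (2 - 2 * (a + b)) + e"
        by (simp add: algebra_simps)
      show ?thesis by (rule gen[OF h1 h2])
    qed
    then have "ereal (2 * M) \<le> ereal (M * (2 - 2 * (K / L + exp L / n))) + ereal e" by simp
    also have "\<dots> \<le> dist_set_N l1norm (vscale M (uv n)) ?A + ereal e"
      using dist_lower[OF M n L] unfolding K_def by (intro add_right_mono)
    also have "\<dots> \<le> (SUP b\<in>Co ?A. dist_set_N l1norm b ?A) + ereal e"
    proof (intro add_right_mono SUP_upper)
      show "vscale M (uv n) \<in> Co ?A" using uv_Co[OF M, of "n - 1"] n by simp
    qed
    finally show "ereal (2 * M) \<le> (SUP b\<in>Co ?A. dist_set_N l1norm b ?A) + ereal e" .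
  qed
  have S2: "(SUP b\<in>Co ?A. dist_set_N l1norm b ?A) = ereal (2 * M)" using S2a S2b by (rule antisym)
  show "hausdorff_N l1norm ?A (Co ?A) = ereal (2 * M)"
  proof -
    have "(SUP a\<in>?A. dist_set_N l1norm a (Co ?A)) \<le> ereal (2 * M)"
      using order_trans[OF S1, of "ereal (2*M)"] M by simp
    then show ?thesis unfolding hausdorff_N_def S2 by (rule max_absorb2)
  qed
  have e1: "vscale M (ev 1) \<in> ?A" by (rule ev_AS[OF M])
  show "diam_N l1norm ?A = ereal (2 * M)"
    unfolding diam_N_def
  proof (rule antisym)
    show "(SUP p\<in>?A \<times> ?A. ereal (l1norm (vsub (fst p) (snd p)))) \<le> ereal (2 * M)"
    proof (rule SUP_least)
      fix p assume "p \<in> ?A \<times> ?A"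
      then have "fst p \<in> ?A" "snd p \<in> ?A" by auto
      then show "ereal (l1norm (vsub (fst p) (snd p))) \<le> ereal (2 * M)"
        using l1norm_sub[of "fst p" "snd p"] AS_l1[OF M] by fastforce
    qed
    have z: "\<And>i. i \<ge> 2 \<Longrightarrow> vsub (vscale M (ev 0)) (vscale M (ev 1)) i = 0"
      unfolding vsub_def vscale_def ev_def by auto
    have "l1norm (vsub (vscale M (ev 0)) (vscale M (ev 1))) = (\<Sum>i<2. \<bar>vsub (vscale M (ev 0)) (vscale M (ev 1)) i\<bar>)"
      by (rule l1_fin(2)[OF z])
    also have "\<dots> = 2 * M" using M by (simp add: vsub_def vscale_def ev_def numeral_2_eq_2)
    finally have "l1norm (vsub (vscale M (ev 0)) (vscale M (ev 1))) = 2 * M" .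
    then show "ereal (2 * M) \<le> (SUP p\<in>?A \<times> ?A. ereal (l1norm (vsub (fst p) (snd p))))"
      using e0 e1 by (intro SUP_upper2[of "(vscale M (ev 0), vscale M (ev 1))"]) auto
  qed
qed

end
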